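(* Let $\rho_1,\rho_2\in\mathbb{M}_2(\mathbb{C})$ be any two non-maximally mixed (NMM) thermal states. Then there exists $\Lambda\in SL(2,\mathbb{C})$ such that the action described below maps $\rho_1$ to $\rho_2$. Explicitly: writing $\rho_1=e^{-\beta H_1}/\mathrm{tr}(e^{-\beta H_1})$ and $\rho_2=e^{-\beta H_2}/\mathrm{tr}(e^{-\beta H_2})$ with a common $\beta>0$ and Hermitian $H_a$ having spectrum $\{0,\epsilon_a\}$, $\epsilon_a>0$, there is $\Lambda\in SL(2,\mathbb{C})$ with $$\rho_2=\frac{e^{-\beta(\Lambda H_1\Lambda^* )}}{\mathrm{tr}\big(e^{-\beta(\Lambda H_1\Lambda^* )}\big)}.$$
   Context: $\mathbb{M}_2(\mathbb{C})$ denotes the $2\times2$ complex matrices, $\Lambda^*$ the conjugate transpose, $\mathbb{1}_2$ the identity. A thermal state on $\mathbb{M}_2(\mathbb{C})$ is a density matrix of the Gibbs form $\rho=e^{-\beta H}/\mathrm{tr}(e^{-\beta H})$ with $\beta>0$ and $H$ Hermitian; it is non-maximally mixed (NMM) if $\rho\neq\frac12\mathbb{1}_2$. Every such $\rho$ can, for any prescribed $\beta>0$, be written in this form with a unique Hermitian $H$ whose spectrum is $\{0,\epsilon\}$ with $\epsilon>0$. The action of $\Lambda\in SL(2,\mathbb{C})$ on NMM thermal states is defined using this normalized $H$: $e^{-\beta H}/\mathrm{tr}(e^{-\beta H})\mapsto e^{-\beta(\Lambda H\Lambda^* )}/\mathrm{tr}(e^{-\beta(\Lambda H\Lambda^* )})$.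 *)

theory Defs
  imports "HOL-Analysis.Analysis"
begin

type_synonym cmat2 = "complex^2^2"

primrec mpow :: "cmat2 \<Rightarrow> nat \<Rightarrow> cmat2" where
  "mpow A 0 = mat 1"
| "mpow A (Suc n) = A ** mpow A n"

definition mexp :: "cmat2 \<Rightarrow> cmat2" where
  "mexp A = (\<chi> i j. \<Sum>n. (mpow A n $ i $ j) / of_nat (fact n))"

definition mtrace :: "cmat2 \<Rightarrow> complex" where
  "mtrace A = (\<Sum>i\<in>UNIV. A $ i $ i)"

definition adjoint_mat :: "cmat2 \<Rightarrow> cmat2" where
  "adjoint_mat A = (\<chi> i j. cnj (A $ j $ i))"

definition hermitian :: "cmat2 \<Rightarrow> bool" where
  "hermitian A \<longleftrightarrow> adjoint_mat A = A"

definition mspectrum :: "cmat2 \<Rightarrow> complex set" where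
  "mspectrum A = {c. \<exists>v. v \<noteq> 0 \<and> A *v v = c *s v}"

definition mscale :: "complex \<Rightarrow> cmat2 \<Rightarrow> cmat2" where
  "mscale c A = (\<chi> i j. c * A $ i $ j)"

definition gibbs :: "real \<Rightarrow> cmat2 \<Rightarrow> cmat2" where
  "gibbs \<beta> H = mscale (inverse (mtrace (mexp (mscale (- complex_of_real \<beta>) H))))
                       (mexp (mscale (- complex_of_real \<beta>) H))"

end

theory Submission
  imports Defs
begin

definition outer :: "complex^2 \<Rightarrow> cmat2" where
  "outer w = (\<chi> i j. w $ i * cnj (w $ j))"

lemma herm_entry:
  assumes "hermitian H" shows "H $ i $ j = cnj (H $ j $ i)"
proof -
  have "adjoint_mat H $ i $ j = H $ i $ j" using assms by (simp add: hermitian_def)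
  then show ?thesis by (simp add: adjoint_mat_def)
qed

lemma spec_det:
  assumes "c \<in> mspectrum H"
  shows "(H$1$1 - c) * (H$2$2 - c) - H$1$2 * H$2$1 = 0"
proof -
  obtain v where v: "v \<noteq> 0" "H *v v = c *s v" using assms by (auto simp: mspectrum_def)
  have e1: "(H$1$1 - c) * v$1 + H$1$2 * v$2 = 0"
    using arg_cong[OF v(2), of "\<lambda>x. x $ 1"]
    by (simp add: matrix_vector_mult_def sum_2 algebra_simps)
  have e2: "H$2$1 * v$1 + (H$2$2 - c) * v$2 = 0"
    using arg_cong[OF v(2), of "\<lambda>x. x $ 2"]
    by (simp add: matrix_vector_mult_def sum_2 algebra_simps)
  let ?D = "(H$1$1 - c) * (H$2$2 - c) - H$1$2 * H$2$1"
  have "?D * v$1 = (H$2$2 - c) * ((H$1$1 - c) * v$1 + H$1$2 * v$2) - H$1$2 * (H$2$1 * v$1 + (H$2$2 - c) * v$2)"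
    by (simp add: algebra_simps)
  then have a: "?D * v$1 = 0" using e1 e2 by simp
  have "?D * v$2 = (H$1$1 - c) * (H$2$1 * v$1 + (H$2$2 - c) * v$2) - H$2$1 * ((H$1$1 - c) * v$1 + H$1$2 * v$2)"
    by (simp add: algebra_simps)
  then have b: "?D * v$2 = 0" using e1 e2 by simp
  have "v$1 \<noteq> 0 \<or> v$2 \<noteq> 0"
  proof (rule ccontr)
    assume "\<not> ?thesis"
    then have "v = 0" by (simp add: vec_eq_iff forall_2)
    with v show False by simp
  qed
  with a b show ?thesis by auto
qed

lemma herm_outer:
  fixes \<epsilon> :: real
  assumes "hermitian H" "mspectrum H = {0, complex_of_real \<epsilon>}" "\<epsilon> > 0"
  shows "\<exists>w. w \<noteq> 0 \<and> H = outer w"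
proof -
  define a where "a = Re (H$1$1)"
  define d where "d = Re (H$2$2)"
  define b where "b = H$1$2"
  have i1: "Im (H$1$1) = 0"
    using arg_cong[OF herm_entry[OF assms(1), of 1 1], of Im] by simp
  have i2: "Im (H$2$2) = 0"
    using arg_cong[OF herm_entry[OF assms(1), of 2 2], of Im] by simp
  have ha: "H$1$1 = complex_of_real a" using i1 unfolding a_def by (simp add: complex_eq_iff)
  have hd: "H$2$2 = complex_of_real d" using i2 unfolding d_def by (simp add: complex_eq_iff)
  have hc: "H$2$1 = cnj b" using herm_entry[OF assms(1), of 2 1] unfolding b_def by simp
  have bb: "b * cnj b = complex_of_real ((cmod b)^2)"
    using complex_norm_square[of b] by simp
  have sd0: "(H$1$1 - 0) * (H$2$2 - 0) - H$1$2 * H$2$1 = 0"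
    using spec_det[of 0 H] assms(2) by simp
  have "complex_of_real (a * d) = complex_of_real ((cmod b)^2)"
  proof -
    have "complex_of_real (a * d) = H$1$1 * H$2$2" using ha hd by simp
    also have "\<dots> = H$1$2 * H$2$1" using sd0 by simp
    also have "\<dots> = complex_of_real ((cmod b)^2)" using hc bb b_def by simp
    finally show ?thesis .
  qed
  hence ad: "a * d = (cmod b)^2" by (simp only: of_real_eq_iff)
  have sde: "(H$1$1 - complex_of_real \<epsilon>) * (H$2$2 - complex_of_real \<epsilon>) - H$1$2 * H$2$1 = 0"
    using spec_det[of "complex_of_real \<epsilon>" H] assms(2) by simp
  have "complex_of_real ((a - \<epsilon>) * (d - \<epsilon>)) = complex_of_real ((cmod b)^2)"
  proof -
    have "complex_of_real ((a - \<epsilon>) * (d - \<epsilon>)) = (H$1$1 - complex_of_real \<epsilon>) * (H$2$2 - complex_of_real \<epsilon>)" using ha hd by simp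
    also have "\<dots> = H$1$2 * H$2$1" using sde by simp
    also have "\<dots> = complex_of_real ((cmod b)^2)" using hc bb b_def by simp
    finally show ?thesis .
  qed
  hence "(a - \<epsilon>) * (d - \<epsilon>) = (cmod b)^2" by (simp only: of_real_eq_iff)
  with ad have "\<epsilon> * \<epsilon> = \<epsilon> * (a + d)" by (simp add: algebra_simps)
  with assms(3) have apd: "a + d = \<epsilon>" by simp
  have a0: "a \<ge> 0" and d0': "d \<ge> 0"
  proof -
    have "a * d \<ge> 0" using ad by simp
    then show "a \<ge> 0" "d \<ge> 0" using apd assms(3)
      using mult_neg_pos[of a d] mult_pos_neg[of a d] by (smt (verit))+
  qed
  show ?thesis
  proof (cases "a = 0")
    case True
    hence bz: "b = 0" using ad by simp
    have dp: "d > 0" using True apd assms(3) by simp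
    have sq: "complex_of_real (sqrt d) * cnj (complex_of_real (sqrt d)) = complex_of_real d"
    proof -
      have "complex_of_real (sqrt d) * cnj (complex_of_real (sqrt d)) = complex_of_real (sqrt d * sqrt d)"
        by (simp only: complex_cnj_complex_of_real of_real_mult)
      also have "sqrt d * sqrt d = d" using dp by simp
      finally show ?thesis .
    qed
    define w :: "complex^2" where "w = (\<chi> i. if i = 1 then 0 else complex_of_real (sqrt d))"
    have "w $ 2 \<noteq> 0" using dp by (simp add: w_def)
    hence "w \<noteq> 0" by auto
    moreover have "H = outer w"
      unfolding outer_def w_def vec_eq_iff forall_2
      using ha hd hc True bz dp b_def sq
      by simp
    ultimately show ?thesis by blast
  next
    case False
    hence ap: "a > 0" using a0 by simp
    define s where "s = complex_of_real (sqrt a)"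
    have s0: "s \<noteq> 0" using ap by (simp add: s_def)
    have cs: "cnj s = s" by (simp add: s_def)
    have ss: "s * s = complex_of_real a"
    proof -
      have "s * s = complex_of_real (sqrt a * sqrt a)" by (simp only: s_def of_real_mult)
      also have "sqrt a * sqrt a = a" using ap by simp
      finally show ?thesis .
    qed
    define w :: "complex^2" where "w = (\<chi> i. if i = 1 then s else cnj b / s)"
    have "w $ 1 \<noteq> 0" using s0 by (simp add: w_def)
    hence "w \<noteq> 0" by auto
    moreover have "H = outer w"
    proof -
      have "cnj b / s * cnj (cnj b / s) = complex_of_real d"
      proof -
        have "cnj b / s * cnj (cnj b / s) = (b * cnj b) / (s * s)" using cs by (simp add: field_simps)
        also have "\<dots> = complex_of_real ((cmod b)^2 / a)" using bb ss by simp
        also have "(cmod b)^2 / a = d" using ad ap by (simp add: field_simps)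
        finally show ?thesis .
      qed
      moreover have "s * cnj (cnj b / s) = b" using cs s0 by simp
      moreover have "cnj b / s * cnj s = cnj b" using cs s0 by simp
      moreover have "s * cnj s = complex_of_real a" using cs ss by simp
      ultimately show ?thesis
        unfolding outer_def w_def vec_eq_iff forall_2
        using ha hd hc b_def by (simp add: cs ss mult.commute)
    qed
    ultimately show ?thesis by blast
  qed
qed

definition e1 :: "complex^2" where "e1 = (\<chi> i. if i = 1 then 1 else 0)"

lemma to_e1:
  fixes w :: "complex^2"
  assumes "w \<noteq> 0"
  shows "\<exists>N. det N = 1 \<and> N *v w = e1"
proof (cases "w$1 = 0")
  case True
  hence w2: "w$2 \<noteq> 0" using assms by (auto simp: vec_eq_iff forall_2)
  define N :: cmat2 where "N = (\<chi> i j. if i = 1 then (if j = 1 then 0 else 1 / w$2)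
                                          else (if j = 1 then - w$2 else 0))"
  have "det N = 1" using w2 by (simp add: det_2 N_def)
  moreover have "N *v w = e1" using w2 True
    by (simp add: N_def e1_def vec_eq_iff forall_2 matrix_vector_mult_def sum_2)
  ultimately show ?thesis by blast
next
  case False
  define N :: cmat2 where "N = (\<chi> i j. if i = 1 then (if j = 1 then 1 / w$1 else 0)
                                          else (if j = 1 then - w$2 else w$1))"
  have "det N = 1" using False by (simp add: det_2 N_def)
  moreover have "N *v w = e1" using False
    by (simp add: N_def e1_def vec_eq_iff forall_2 matrix_vector_mult_def sum_2 algebra_simps)
  ultimately show ?thesis by blast
qed

lemma transitive:
  fixes w1 w2 :: "complex^2"
  assumes "w1 \<noteq> 0" "w2 \<noteq> 0"
  shows "\<exists>L. det L = 1 \<and> L *v w1 = w2"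
proof -
  obtain N1 where n1: "det N1 = 1" "N1 *v w1 = e1" using to_e1[OF assms(1)] by blast
  obtain N2 where n2: "det N2 = 1" "N2 *v w2 = e1" using to_e1[OF assms(2)] by blast
  define M :: cmat2 where "M = (\<chi> i j. if i = 1 then (if j = 1 then N2$2$2 else - N2$1$2)
                                else (if j = 1 then - N2$2$1 else N2$1$1))"
  have d: "N2$1$1 * N2$2$2 - N2$1$2 * N2$2$1 = 1" using n2(1) by (simp add: det_2)
  have "\<And>i j. (M ** N2) $ i $ j = mat 1 $ i $ j"
  proof -
    fix i j :: 2
    show "(M ** N2) $ i $ j = mat 1 $ i $ j"
      using exhaust_2[of i] exhaust_2[of j] d
      by (auto simp: M_def matrix_matrix_mult_def sum_2 mat_def mult.commute)
  qed
  then have MN: "M ** N2 = mat 1" by (simp add: vec_eq_iff)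
  have dM: "det M = 1" using d by (simp add: M_def det_2 mult.commute)
  have "M *v e1 = w2"
    using n2(2) MN by (metis matrix_vector_mul_assoc matrix_vector_mul_lid)
  hence "(M ** N1) *v w1 = w2" using n1(2) by (metis matrix_vector_mul_assoc)
  moreover have "det (M ** N1) = 1" using dM n1(1) by (simp add: det_mul)
  ultimately show ?thesis by blast
qed

lemma outer_conj:
  "L ** outer w ** adjoint_mat L = outer (L *v w)"
proof -
  have "\<And>i j. (L ** outer w ** adjoint_mat L) $ i $ j = outer (L *v w) $ i $ j"
  proof -
    fix i j
    show "(L ** outer w ** adjoint_mat L) $ i $ j = outer (L *v w) $ i $ j"
      unfolding outer_def adjoint_mat_def matrix_matrix_mult_def matrix_vector_mult_def
      apply (simp add: sum_2)
      apply (simp add: distrib_left distrib_right mult_ac)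
      done
  qed
  then show ?thesis by (simp add: vec_eq_iff)
qed

theorem proposition2:
  fixes \<beta> \<epsilon>1 \<epsilon>2 :: real and H1 H2 :: cmat2
  assumes "\<beta> > 0"
    and "hermitian H1" and "mspectrum H1 = {0, complex_of_real \<epsilon>1}" and "\<epsilon>1 > 0"
    and "hermitian H2" and "mspectrum H2 = {0, complex_of_real \<epsilon>2}" and "\<epsilon>2 > 0"
  shows "\<exists>\<Lambda> :: cmat2. det \<Lambda> = 1 \<and>
           gibbs \<beta> H2 = gibbs \<beta> (\<Lambda> ** H1 ** adjoint_mat \<Lambda>)"
proof -
  obtain w1 where w1: "w1 \<noteq> 0" "H1 = outer w1" using herm_outer assms(2-4) by blast
  obtain w2 where w2: "w2 \<noteq> 0" "H2 = outer w2" using herm_outer assms(5-7) by blast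
  obtain L where L: "det L = 1" "L *v w1 = w2" using transitive[OF w1(1) w2(1)] by blast
  have "L ** H1 ** adjoint_mat L = H2" using w1(2) w2(2) L(2) outer_conj by simp
  then show ?thesis using L(1) by metis
qed

end
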